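(* In the graph $\Gamma_n$, a set of edges $\{(A_1,i_1),(A_2,i_2),\dots,(A_n,i_n)\}$ is ample if $i_1,i_2,\dots,i_n$ are pairwise distinct.
   Context: $\Gamma_n$ is the directed graph whose vertices are all subsets of $\{1,\dots,n\}$ and whose edges are the pairs $(A,i)$ with $A\subseteq\{1,\dots,n\}$, $i\notin A$; the edge $(A,i)$ has tail $A\cup\{i\}$ and head $A$. A directed path is a sequence of edges $e_1,\dots,e_k$ with the head of $e_i$ equal to the tail of $e_{i+1}$; each vertex is joined to itself by the path of length $0$. A source is a vertex that is the head of no edge, a sink a vertex that is the tail of no edge (here the unique source is $\{1,\dots,n\}$ and the unique sink is $\emptyset$). A set $W$ of vertices is ample if (1) for every non-sink vertex $v$ there is $u\in W$ such that there is no directed path from $u$ to $v$, and (2) for every non-source vertex $v$ there is $w\in W$ such that there is no directed path from $v$ to $w$. A set of edges is ample if the set of all their heads and tails is ample. *)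

theory Defs
  imports Main
begin

definition gamma_vert :: "nat \<Rightarrow> nat set set" where
  "gamma_vert n = {A. A \<subseteq> {1..n}}"

definition gamma_edge :: "nat \<Rightarrow> (nat set \<times> nat) set" where
  "gamma_edge n = {(A, i). A \<subseteq> {1..n} \<and> i \<in> {1..n} \<and> i \<notin> A}"

definition edge_tail :: "nat set \<times> nat \<Rightarrow> nat set" where
  "edge_tail e = insert (snd e) (fst e)"

definition edge_head :: "nat set \<times> nat \<Rightarrow> nat set" where
  "edge_head e = fst e"

definition gamma_step :: "nat \<Rightarrow> nat set \<Rightarrow> nat set \<Rightarrow> bool" where
  "gamma_step n u v \<longleftrightarrow> (\<exists>e\<in>gamma_edge n. edge_tail e = u \<and> edge_head e = v)"

definition gamma_path :: "nat \<Rightarrow> nat set \<Rightarrow> nat set \<Rightarrow> bool" where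
  "gamma_path n u v \<longleftrightarrow> (gamma_step n)\<^sup>*\<^sup>* u v"

definition gamma_source :: "nat \<Rightarrow> nat set \<Rightarrow> bool" where
  "gamma_source n v \<longleftrightarrow> v \<in> gamma_vert n \<and> \<not> (\<exists>e\<in>gamma_edge n. edge_head e = v)"

definition gamma_sink :: "nat \<Rightarrow> nat set \<Rightarrow> bool" where
  "gamma_sink n v \<longleftrightarrow> v \<in> gamma_vert n \<and> \<not> (\<exists>e\<in>gamma_edge n. edge_tail e = v)"

definition ample_vertices :: "nat \<Rightarrow> nat set set \<Rightarrow> bool" where
  "ample_vertices n W \<longleftrightarrow>
     (\<forall>v\<in>gamma_vert n. \<not> gamma_sink n v \<longrightarrow> (\<exists>u\<in>W. \<not> gamma_path n u v)) \<and>
     (\<forall>v\<in>gamma_vert n. \<not> gamma_source n v \<longrightarrow> (\<exists>w\<in>W. \<not> gamma_path n v w))"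

definition ample_edges :: "nat \<Rightarrow> (nat set \<times> nat) set \<Rightarrow> bool" where
  "ample_edges n E \<longleftrightarrow> ample_vertices n (edge_head ` E \<union> edge_tail ` E)"

end

theory Submission
  imports Defs
begin

lemma path_sub: "gamma_path n u v \<Longrightarrow> v \<subseteq> u"
  unfolding gamma_path_def
proof (induction rule: rtranclp_induct)
  case base then show ?case by simp
next
  case (step y z)
  then show ?case unfolding gamma_step_def edge_tail_def edge_head_def by auto
qed

theorem proposition3p2p3:
  fixes n :: nat and A :: "nat \<Rightarrow> nat set" and i :: "nat \<Rightarrow> nat"
  assumes "\<forall>k\<in>{1..n}. (A k, i k) \<in> gamma_edge n"
    and "inj_on i {1..n}"
  shows "ample_edges n ((\<lambda>k. (A k, i k)) ` {1..n})"
proof -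
  have sub: "i ` {1..n} \<subseteq> {1..n}" using assms(1) by (auto simp: gamma_edge_def)
  have surj: "i ` {1..n} = {1..n}" using endo_inj_surj[OF _ sub assms(2)] by simp
  show ?thesis
    unfolding ample_edges_def ample_vertices_def
  proof (intro conjI ballI impI)
    fix v assume v: "v \<in> gamma_vert n" "\<not> gamma_sink n v"
    then obtain e where e: "e \<in> gamma_edge n" "edge_tail e = v"
      by (auto simp: gamma_sink_def)
    then have "snd e \<in> v" "snd e \<in> {1..n}"
      by (auto simp: edge_tail_def gamma_edge_def)
    then obtain k where k: "k \<in> {1..n}" "i k = snd e" using surj by (metis imageE)
    have "i k \<notin> A k" using assms(1) k(1) by (auto simp: gamma_edge_def)
    then have "\<not> gamma_path n (A k) v" using path_sub \<open>snd e \<in> v\<close> k(2) by (metis subsetD)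
    moreover have "A k \<in> edge_head ` (\<lambda>k. (A k, i k)) ` {1..n} \<union> edge_tail ` (\<lambda>k. (A k, i k)) ` {1..n}"
      using k(1) by (intro UnI1 image_eqI[where x="(A k, i k)"]) (auto simp: edge_head_def)
    ultimately show "\<exists>u\<in>edge_head ` (\<lambda>k. (A k, i k)) ` {1..n} \<union> edge_tail ` (\<lambda>k. (A k, i k)) ` {1..n}.
            \<not> gamma_path n u v" by blast
  next
    fix v assume v: "v \<in> gamma_vert n" "\<not> gamma_source n v"
    then obtain e where e: "e \<in> gamma_edge n" "edge_head e = v"
      by (auto simp: gamma_source_def)
    then have "snd e \<notin> v" "snd e \<in> {1..n}"
      by (auto simp: edge_head_def gamma_edge_def)
    then obtain k where k: "k \<in> {1..n}" "i k = snd e" using surj by (metis imageE)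
    have "\<not> gamma_path n v (insert (i k) (A k))" using path_sub \<open>snd e \<notin> v\<close> k(2) by (metis insertI1 subsetD)
    moreover have "insert (i k) (A k) \<in> edge_head ` (\<lambda>k. (A k, i k)) ` {1..n} \<union> edge_tail ` (\<lambda>k. (A k, i k)) ` {1..n}"
      using k(1) by (intro UnI2 image_eqI[where x="(A k, i k)"]) (auto simp: edge_tail_def)
    ultimately show "\<exists>w\<in>edge_head ` (\<lambda>k. (A k, i k)) ` {1..n} \<union> edge_tail ` (\<lambda>k. (A k, i k)) ` {1..n}.
            \<not> gamma_path n v w" by blast
  qed
qed

end
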